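(* Let $n\ge 1$, let $m_1,\dots,m_n$ and $x_1,\dots,x_n$ be real coordinates on the phase space with $x_1,\dots,x_n$ pairwise distinct, and equip functions of $(x,m)$ with the Poisson bracket determined by $$\{x_i,x_k\}=\operatorname{sgn}(x_i-x_k),\qquad \{m_i,m_k\}=\{m_i,x_k\}=0 .$$ Let $$h=\sum_{i,k=1}^n m_i m_k e^{-|x_i-x_k|}.$$ Then the Hamiltonian equations $\dot x_j=\{x_j,h\}$, $\dot m_j=\{m_j,h\}$ are exactly the system $$\dot m_j=0,\qquad \dot x_j=2\sum_{\substack{1\le k\le n\\ k\neq j}} m_j m_k e^{-|x_j-x_k|}+\sum_{k\neq j,\ i\neq j} m_i m_k\bigl(1-\operatorname{sgn}(x_j-x_k)\operatorname{sgn}(x_j-x_i)\bigr)e^{-|x_j-x_k|-|x_j-x_i|},\qquad 1\le j\le n,$$ (the second sum running over all pairs $(i,k)$ with $i\neq j$, $k\neq j$), i.e. the equations of motion of $n$ conservative peakons of the modified Camassa–Holm equation. Moreover, with $u(x)=\sum_{j=1}^n m_j e^{-|x-x_j|}$ and $m=u-u_{xx}=2\sum_{j=1}^n m_j\delta_{x_j}$, one has $h=\tfrac12\int u\,m\,d\xi=\tfrac12\|u\|_{H^1}^2$.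
   Context: The system arises from the modified Camassa–Holm equation $m_t+((u^2-u_x^2)m)_x=0$, $m=u-u_{xx}$, with the peakon Ansatz $u=\sum_j m_j(t)e^{-|x-x_j(t)|}$ and the rule that $u_x^2 m$ is defined by multiplying the Dirac mass at each $x_j$ by the arithmetic average of the left and right limits of $u_x^2$ at $x_j$; this gives $\dot m_j=0$, $\dot x_j=u(x_j)^2-\langle u_x^2\rangle(x_j)$, which is the displayed system. Here $\|u\|_{H^1}^2=\int(u^2+u_x^2)\,dx$. *)

theory Defs
  imports "HOL-Analysis.Analysis"
begin

text \<open>Phase space: positions x and amplitudes m, both in real^'n, where the finite
  index type 'n plays the role of {1..n} (n = CARD('n) \<ge> 1).\<close>

definition dX :: "(real^'n \<Rightarrow> real^'n \<Rightarrow> real) \<Rightarrow> 'n \<Rightarrow> real^'n \<Rightarrow> real^'n \<Rightarrow> real" where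
  "dX F i x m = deriv (\<lambda>t. F (x + t *\<^sub>R axis i 1) m) 0"

definition dM :: "(real^'n \<Rightarrow> real^'n \<Rightarrow> real) \<Rightarrow> 'n \<Rightarrow> real^'n \<Rightarrow> real^'n \<Rightarrow> real" where
  "dM F i x m = deriv (\<lambda>t. F x (m + t *\<^sub>R axis i 1)) 0"

text \<open>Poisson bracket determined by the coordinate brackets
  {x_i,x_k} = sgn(x_i - x_k), {x_i,m_k} = {m_i,x_k} = {m_i,m_k} = 0,
  extended as a biderivation: {F,G} = sum over coordinates a,b of dF/dz_a dG/dz_b {z_a,z_b}.\<close>

definition pbracket :: "(real^'n \<Rightarrow> real^'n \<Rightarrow> real) \<Rightarrow> (real^'n \<Rightarrow> real^'n \<Rightarrow> real)
    \<Rightarrow> real^'n \<Rightarrow> real^'n \<Rightarrow> real" where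
  "pbracket F G x m =
     (\<Sum>i\<in>UNIV. \<Sum>k\<in>UNIV.
          dX F i x m * dX G k x m * sgn (x$i - x$k)
        + dX F i x m * dM G k x m * 0
        + dM F i x m * dX G k x m * 0
        + dM F i x m * dM G k x m * 0)"

definition ham :: "real^'n \<Rightarrow> real^'n \<Rightarrow> real" where
  "ham x m = (\<Sum>i\<in>UNIV. \<Sum>k\<in>UNIV. m$i * m$k * exp (- \<bar>x$i - x$k\<bar>))"

definition peakon_u :: "real^'n \<Rightarrow> real^'n \<Rightarrow> real \<Rightarrow> real" where
  "peakon_u x m \<xi> = (\<Sum>j\<in>UNIV. m$j * exp (- \<bar>\<xi> - x$j\<bar>))"

text \<open>Pairing \<integral> u dm of a continuous function u with the measure m = 2 \<Sum> m_j \<delta>_{x_j}.\<close>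
definition pair_with_m :: "real^'n \<Rightarrow> real^'n \<Rightarrow> (real \<Rightarrow> real) \<Rightarrow> real" where
  "pair_with_m x m f = (\<Sum>j\<in>UNIV. 2 * m$j * f (x$j))"

definition mCH_rhs :: "real^'n \<Rightarrow> real^'n \<Rightarrow> 'n \<Rightarrow> real" where
  "mCH_rhs x m j =
     2 * (\<Sum>k\<in>UNIV - {j}. m$j * m$k * exp (- \<bar>x$j - x$k\<bar>))
   + (\<Sum>i\<in>UNIV - {j}. \<Sum>k\<in>UNIV - {j}.
        m$i * m$k * (1 - sgn (x$j - x$k) * sgn (x$j - x$i))
          * exp (- \<bar>x$j - x$k\<bar> - \<bar>x$j - x$i\<bar>))"

end

theory Submission
  imports Defs
begin

lemma E_deriv:
  fixes a \<xi> :: real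
  assumes "\<xi> \<noteq> a"
  shows "((\<lambda>t. exp (- \<bar>t - a\<bar>)) has_real_derivative (- sgn (\<xi> - a) * exp (- \<bar>\<xi> - a\<bar>))) (at \<xi>)"
proof (cases "\<xi> > a")
  case True
  have d: "((\<lambda>t. exp (- (t - a))) has_real_derivative (- sgn (\<xi> - a) * exp (- \<bar>\<xi> - a\<bar>))) (at \<xi>)"
    using True by (auto intro!: derivative_eq_intros)
  show ?thesis
    by (rule has_field_derivative_transform_within_open[OF d, of "{a<..}"]) (use True in auto)
next
  case False
  with assms have F: "\<xi> < a" by auto
  have d: "((\<lambda>t. exp (t - a)) has_real_derivative (- sgn (\<xi> - a) * exp (- \<bar>\<xi> - a\<bar>))) (at \<xi>)"
    using F by (auto intro!: derivative_eq_intros)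
  show ?thesis
    by (rule has_field_derivative_transform_within_open[OF d, of "{..<a}"]) (use F in auto)
qed

lemma exp_right: "c > 0 \<Longrightarrow> ((\<lambda>x::real. exp (-c*x)) has_integral exp (-c*d)/c) {d..}"
  by (rule has_integral_exp_minus_to_infinity)

lemma exp_left:
  assumes c: "c > 0"
  shows "((\<lambda>x::real. exp (c*x)) has_integral exp (c*d)/c) {..d}"
proof -
  have h: "((\<lambda>x::real. exp (-c*x)) has_integral exp (-c*(-d))/c) {-d..}"
    using has_integral_exp_minus_to_infinity[OF c] .
  have ai: "(\<lambda>x::real. exp (-c*x)) absolutely_integrable_on {-d..}"
    using h by (intro nonnegative_absolutely_integrable_1) (auto simp: has_integral_integrable)
  have "(\<lambda>x. exp (c * (- x))) absolutely_integrable_on {-d..} \<and> integral {-d..} (\<lambda>x. exp (c * (- x))) = exp (c*d)/c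
     \<longleftrightarrow> (\<lambda>x. exp (c*x)) absolutely_integrable_on {..d} \<and> integral {..d} (\<lambda>x. exp (c*x)) = exp (c*d)/c"
    by (rule has_absolute_integral_reflect_real) auto
  moreover have "(\<lambda>x. exp (c * (- x))) absolutely_integrable_on {-d..} \<and> integral {-d..} (\<lambda>x. exp (c * (- x))) = exp (c*d)/c"
    using ai h integral_unique[OF h] by simp
  ultimately show ?thesis
    using absolutely_integrable_on_def has_integral_integral by (metis (no_types, lifting))
qed


definition Kf :: "real \<Rightarrow> real \<Rightarrow> real \<Rightarrow> real" where
  "Kf a b \<xi> = exp (- \<bar>\<xi> - a\<bar>) * exp (- \<bar>\<xi> - b\<bar>) + sgn (\<xi> - a) * sgn (\<xi> - b) * (exp (- \<bar>\<xi> - a\<bar>) * exp (- \<bar>\<xi> - b\<bar>))"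

lemma K_le:
  assumes ab: "a \<le> b"
  shows "(Kf a b has_integral 2 * exp (- \<bar>a - b\<bar>)) UNIV"
proof -
  define P where "P \<xi> = (if \<xi> \<le> a then 2 * exp (-(a+b)) * exp (2*\<xi>) else if b \<le> \<xi> then 2 * exp (a+b) * exp (-2*\<xi>) else 0)" for \<xi>
  have L0: "((\<lambda>\<xi>. 2 * exp (-(a+b)) * exp (2*\<xi>)) has_integral 2 * exp (-(a+b)) * (exp (2*a)/2)) {..a}"
    by (intro has_integral_mult_right exp_left) auto
  have L: "(P has_integral exp (a - b)) {..a}"
    using has_integral_spike_finite[OF _ _ L0, of "{}" P]
    by (auto simp: P_def mult_exp_exp)
  have R0: "((\<lambda>\<xi>. 2 * exp (a+b) * exp (-2*\<xi>)) has_integral 2 * exp (a+b) * (exp (-2*b)/2)) {b..}"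
    by (intro has_integral_mult_right exp_right) auto
  have R: "(P has_integral exp (a - b)) {b..}"
    using has_integral_spike_finite[OF _ _ R0, of "{}" P] ab
    by (auto simp: P_def mult_exp_exp)
  have neg: "negligible ({..a} \<inter> {b..})"
  proof -
    have "{..a} \<inter> {b..} \<subseteq> {a}" using ab by auto
    then show ?thesis by (meson negligible_sing negligible_subset)
  qed
  have LR: "(P has_integral exp (a - b) + exp (a - b)) ({..a} \<union> {b..})"
    by (rule has_integral_Un[OF L R neg])
  have U: "(P has_integral 2 * exp (- \<bar>a - b\<bar>)) UNIV"
  proof -
    have e: "exp (a - b) + exp (a - b) = 2 * exp (- \<bar>a - b\<bar>)" using ab by simp
    show ?thesis
      using has_integral_on_superset[OF LR, of UNIV] ab unfolding e by (auto simp: P_def)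
  qed
  show ?thesis
  proof (rule has_integral_spike_finite[OF _ _ U, of "{a,b}"])
    fix \<xi> assume "\<xi> \<in> UNIV - {a,b}"
    then have ne: "\<xi> \<noteq> a" "\<xi> \<noteq> b" by auto
    show "Kf a b \<xi> = P \<xi>"
      using ab ne by (auto simp: Kf_def P_def sgn_if mult_exp_exp abs_if algebra_simps)
  qed auto
qed

lemma K_all: "(Kf a b has_integral 2 * exp (- \<bar>a - b\<bar>)) UNIV"
proof (cases "a \<le> b")
  case True then show ?thesis by (rule K_le)
next
  case False
  have "Kf a b = Kf b a" by (auto simp: Kf_def fun_eq_iff)
  moreover have "\<bar>a - b\<bar> = \<bar>b - a\<bar>" by simp
  ultimately show ?thesis using K_le[of b a] False by simp
qed


lemma deriv_zero_open:
  fixes f :: "real \<Rightarrow> real"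
  assumes "(f has_real_derivative D) (at \<xi>)" "open S" "\<xi> \<in> S" "\<And>y. y \<in> S \<Longrightarrow> f y = 0"
  shows "D = 0"
proof -
  have "((\<lambda>_. 0) has_real_derivative 0) (at \<xi>)" by simp
  then have "(f has_real_derivative 0) (at \<xi>)"
    by (rule has_field_derivative_transform_within_open[OF _ assms(2,3)]) (use assms(4) in auto)
  then show ?thesis using assms(1) DERIV_unique by blast
qed

lemma D_lemma:
  fixes \<phi> \<phi>' \<phi>'' :: "real \<Rightarrow> real"
  assumes d1: "\<And>\<xi>. (\<phi> has_real_derivative \<phi>' \<xi>) (at \<xi>)"
    and d2: "\<And>\<xi>. (\<phi>' has_real_derivative \<phi>'' \<xi>) (at \<xi>)"
    and bnd: "bounded {\<xi>. \<phi> \<xi> \<noteq> 0}"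
  shows "((\<lambda>\<xi>. exp (- \<bar>\<xi> - a\<bar>) * (\<phi> \<xi> - \<phi>'' \<xi>)) has_integral 2 * \<phi> a) UNIV"
proof -
  obtain B where B: "\<And>\<xi>. \<phi> \<xi> \<noteq> 0 \<Longrightarrow> \<bar>\<xi>\<bar> \<le> B"
    using bnd unfolding bounded_real by auto
  have z0: "\<phi> \<xi> = 0" if "\<bar>\<xi>\<bar> > B" for \<xi> using B that by force
  have S_open: "open ({B<..} \<union> {..<-B})" by auto
  have z1: "\<phi>' \<xi> = 0" if "\<bar>\<xi>\<bar> > B" for \<xi>
    by (rule deriv_zero_open[OF d1 S_open]) (use that z0 in auto)
  have z2: "\<phi>'' \<xi> = 0" if "\<bar>\<xi>\<bar> > B" for \<xi>
    by (rule deriv_zero_open[OF d2 S_open]) (use that z1 in auto)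
  define R where "R = \<bar>B\<bar> + \<bar>a\<bar> + 1"
  have R: "\<bar>R\<bar> > B" "-R \<le> a" "a \<le> R" "\<bar>-R\<bar> > B" unfolding R_def by auto
  define g where "g \<xi> = exp (- \<bar>\<xi> - a\<bar>) * (\<phi> \<xi> - \<phi>'' \<xi>)" for \<xi>
  define F where "F t = exp (-(t-a)) * (\<phi>' t + \<phi> t)" for t
  define G where "G t = exp (t-a) * (\<phi>' t - \<phi> t)" for t
  have dF: "(F has_real_derivative exp (-(t-a)) * (\<phi>'' t - \<phi> t)) (at t)" for t
  proof -
    have "(F has_real_derivative (- exp (-(t-a)) * (\<phi>' t + \<phi> t) + exp (-(t-a)) * (\<phi>'' t + \<phi>' t))) (at t)"
      unfolding F_def by (auto intro!: derivative_eq_intros d1 d2)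
    then show ?thesis by (simp add: algebra_simps)
  qed
  have dG: "(G has_real_derivative exp (t-a) * (\<phi>'' t - \<phi> t)) (at t)" for t
  proof -
    have "(G has_real_derivative (exp (t-a) * (\<phi>' t - \<phi> t) + exp (t-a) * (\<phi>'' t - \<phi>' t))) (at t)"
      unfolding G_def by (auto intro!: derivative_eq_intros d1 d2)
    then show ?thesis by (simp add: algebra_simps)
  qed
  have IF: "((\<lambda>t. exp (-(t-a)) * (\<phi>'' t - \<phi> t)) has_integral (F R - F a)) {a..R}"
    by (rule fundamental_theorem_of_calculus[OF R(3)])
       (use dF[unfolded has_real_derivative_iff_has_vector_derivative] in \<open>blast intro: has_vector_derivative_at_within\<close>)
  have IG: "((\<lambda>t. exp (t-a) * (\<phi>'' t - \<phi> t)) has_integral (G a - G (-R))) {-R..a}"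
    by (rule fundamental_theorem_of_calculus[OF R(2)])
       (use dG[unfolded has_real_derivative_iff_has_vector_derivative] in \<open>blast intro: has_vector_derivative_at_within\<close>)
  have FR: "F R = 0" using z0[OF R(1)] z1[OF R(1)] by (simp add: F_def)
  have GR: "G (-R) = 0" using z0[OF R(4)] z1[OF R(4)] by (simp add: G_def)
  have IF': "(g has_integral (\<phi>' a + \<phi> a)) {a..R}"
  proof -
    have "((\<lambda>t. - (exp (-(t-a)) * (\<phi>'' t - \<phi> t))) has_integral - (F R - F a)) {a..R}"
      by (rule has_integral_neg[OF IF])
    moreover have "- (F R - F a) = \<phi>' a + \<phi> a" using FR by (simp add: F_def)
    moreover have "g t = - (exp (-(t-a)) * (\<phi>'' t - \<phi> t))" if "t \<in> {a..R}" for t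
      using that by (simp add: g_def algebra_simps)
    ultimately show ?thesis
      using has_integral_spike_finite[of "{}" "{a..R}" g "\<lambda>t. - (exp (-(t-a)) * (\<phi>'' t - \<phi> t))"]
      by auto
  qed
  have IG': "(g has_integral (\<phi> a - \<phi>' a)) {-R..a}"
  proof -
    have "((\<lambda>t. - (exp (t-a) * (\<phi>'' t - \<phi> t))) has_integral - (G a - G (-R))) {-R..a}"
      by (rule has_integral_neg[OF IG])
    moreover have "- (G a - G (-R)) = \<phi> a - \<phi>' a" using GR by (simp add: G_def)
    moreover have "g t = - (exp (t-a) * (\<phi>'' t - \<phi> t))" if "t \<in> {-R..a}" for t
      using that by (simp add: g_def algebra_simps)
    ultimately show ?thesis
      using has_integral_spike_finite[of "{}" "{-R..a}" g "\<lambda>t. - (exp (t-a) * (\<phi>'' t - \<phi> t))"]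
      by auto
  qed
  have I: "(g has_integral 2 * \<phi> a) {-R..R}"
    using has_integral_combine[OF R(2) R(3) IG' IF'] by simp
  have "(g has_integral 2 * \<phi> a) UNIV"
  proof (rule has_integral_on_superset[OF I])
    fix \<xi> assume "\<xi> \<notin> {-R..R}"
    then have "\<bar>\<xi>\<bar> > B" using R unfolding R_def by auto
    then show "g \<xi> = 0" using z0 z2 by (simp add: g_def)
  qed auto
  moreover have "g = (\<lambda>\<xi>. exp (- \<bar>\<xi> - a\<bar>) * (\<phi> \<xi> - \<phi>'' \<xi>))" by (simp add: g_def fun_eq_iff)
  ultimately show ?thesis by simp
qed


lemma pt3:
  fixes j k l :: real
  assumes "k \<noteq> j" "l \<noteq> j"
  shows "- sgn (j - k) * sgn (k - l) * exp (- \<bar>k - l\<bar>) - sgn (j - l) * sgn (l - k) * exp (- \<bar>l - k\<bar>)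
     = (1 - sgn (j - k) * sgn (j - l)) * exp (- \<bar>j - k\<bar> - \<bar>j - l\<bar>)"
proof -
  consider "k < j" "l < j" "k < l" | "k < j" "l < j" "k = l" | "k < j" "l < j" "l < k"
    | "k < j" "j < l" | "j < k" "l < j" | "j < k" "j < l" "k < l" | "j < k" "j < l" "k = l" | "j < k" "j < l" "l < k"
    using assms by linarith
  then show ?thesis
    by cases (auto simp: sgn_if abs_if algebra_simps)
qed


lemma sum_ident:
  fixes X M :: "'n::finite \<Rightarrow> real"
  assumes inj: "inj X"
  shows "(\<Sum>k\<in>UNIV. sgn (X j - X k) * (-2 * (\<Sum>l\<in>UNIV. M k * M l * sgn (X k - X l) * exp (- \<bar>X k - X l\<bar>))))
    = 2 * (\<Sum>k\<in>UNIV - {j}. M j * M k * exp (- \<bar>X j - X k\<bar>))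
      + (\<Sum>i\<in>UNIV - {j}. \<Sum>k\<in>UNIV - {j}.
          M i * M k * (1 - sgn (X j - X k) * sgn (X j - X i)) * exp (- \<bar>X j - X k\<bar> - \<bar>X j - X i\<bar>))"
proof -
  define T where "T k l = -2 * (sgn (X j - X k) * sgn (X k - X l)) * (M k * M l * exp (- \<bar>X k - X l\<bar>))" for k l
  define Rf where "Rf i k = M i * M k * (1 - sgn (X j - X k) * sgn (X j - X i)) * exp (- \<bar>X j - X k\<bar> - \<bar>X j - X i\<bar>)" for i k
  have ne: "X k \<noteq> X j" if "k \<noteq> j" for k using inj that by (meson injD)
  have s1: "(\<Sum>k\<in>UNIV. sgn (X j - X k) * (-2 * (\<Sum>l\<in>UNIV. M k * M l * sgn (X k - X l) * exp (- \<bar>X k - X l\<bar>))))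
     = (\<Sum>k\<in>UNIV. \<Sum>l\<in>UNIV. T k l)"
    unfolding T_def sum_distrib_left by (intro sum.cong refl) (simp only: mult_ac)
  also have "\<dots> = (\<Sum>k\<in>UNIV - {j}. \<Sum>l\<in>UNIV. T k l)"
    by (subst sum.remove[of UNIV j]) (auto simp: T_def)
  also have "\<dots> = (\<Sum>k\<in>UNIV - {j}. T k j + (\<Sum>l\<in>UNIV - {j}. T k l))"
    by (intro sum.cong refl, subst sum.remove[of UNIV j]) auto
  also have "\<dots> = (\<Sum>k\<in>UNIV - {j}. T k j) + (\<Sum>k\<in>UNIV - {j}. \<Sum>l\<in>UNIV - {j}. T k l)"
    by (simp add: sum.distrib)
  also have "(\<Sum>k\<in>UNIV - {j}. T k j) = 2 * (\<Sum>k\<in>UNIV - {j}. M j * M k * exp (- \<bar>X j - X k\<bar>))"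
  proof -
    have "T k j = 2 * (M j * M k * exp (- \<bar>X j - X k\<bar>))" if "k \<in> UNIV - {j}" for k
    proof -
      have "X k \<noteq> X j" using ne that by auto
      then have "sgn (X j - X k) * sgn (X k - X j) = -1" by (auto simp: sgn_if)
      moreover have "\<bar>X k - X j\<bar> = \<bar>X j - X k\<bar>" by simp
      ultimately show ?thesis unfolding T_def by simp
    qed
    then show ?thesis by (simp add: sum_distrib_left)
  qed
  also have "(\<Sum>k\<in>UNIV - {j}. \<Sum>l\<in>UNIV - {j}. T k l) = (\<Sum>k\<in>UNIV - {j}. \<Sum>l\<in>UNIV - {j}. Rf l k)"
  proof -
    have sw: "(\<Sum>k\<in>UNIV - {j}. \<Sum>l\<in>UNIV - {j}. T k l) = (\<Sum>k\<in>UNIV - {j}. \<Sum>l\<in>UNIV - {j}. T l k)"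
      by (rule sum.swap)
    have pt: "T k l + T l k = 2 * Rf l k" if "k \<in> UNIV - {j}" "l \<in> UNIV - {j}" for k l
    proof -
      have "X k \<noteq> X j" "X l \<noteq> X j" using ne that by auto
      from pt3[OF this, of] have e: "- sgn (X j - X k) * sgn (X k - X l) * exp (- \<bar>X k - X l\<bar>) - sgn (X j - X l) * sgn (X l - X k) * exp (- \<bar>X l - X k\<bar>) =
        (1 - sgn (X j - X k) * sgn (X j - X l)) * exp (- \<bar>X j - X k\<bar> - \<bar>X j - X l\<bar>)" .
      have "T k l + T l k = 2 * (M k * M l) * (- sgn (X j - X k) * sgn (X k - X l) * exp (- \<bar>X k - X l\<bar>) - sgn (X j - X l) * sgn (X l - X k) * exp (- \<bar>X l - X k\<bar>))"
        by (simp add: T_def algebra_simps)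
      also have "\<dots> = 2 * Rf l k" unfolding e Rf_def by (simp add: algebra_simps)
      finally show ?thesis .
    qed
    have "2 * (\<Sum>k\<in>UNIV - {j}. \<Sum>l\<in>UNIV - {j}. T k l) = (\<Sum>k\<in>UNIV - {j}. \<Sum>l\<in>UNIV - {j}. T k l + T l k)"
    proof -
      have "(\<Sum>k\<in>UNIV - {j}. \<Sum>l\<in>UNIV - {j}. T k l + T l k) = (\<Sum>k\<in>UNIV - {j}. \<Sum>l\<in>UNIV - {j}. T k l) + (\<Sum>k\<in>UNIV - {j}. \<Sum>l\<in>UNIV - {j}. T l k)"
        by (simp add: sum.distrib)
      then show ?thesis using sw by simp
    qed
    also have "\<dots> = 2 * (\<Sum>k\<in>UNIV - {j}. \<Sum>l\<in>UNIV - {j}. Rf l k)"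
      by (simp add: pt sum_distrib_left)
    finally show ?thesis by simp
  qed
  also have "(\<Sum>k\<in>UNIV - {j}. \<Sum>l\<in>UNIV - {j}. Rf l k) = (\<Sum>i\<in>UNIV - {j}. \<Sum>k\<in>UNIV - {j}. Rf i k)"
    by (rule sum.swap)
  finally show ?thesis unfolding Rf_def .
qed


lemma term_deriv:
  fixes d c :: real
  assumes "d \<noteq> 0 \<or> c = 0"
  shows "((\<lambda>t. exp (- \<bar>d + c * t\<bar>)) has_real_derivative (- c * sgn d * exp (- \<bar>d\<bar>))) (at 0)"
proof (cases "c = 0")
  case True then show ?thesis by simp
next
  case False
  with assms have d: "d \<noteq> 0" by auto
  have "((\<lambda>t. exp (- \<bar>(d + c * t) - 0\<bar>)) has_real_derivative (- sgn ((d + c * 0) - 0) * exp (- \<bar>(d + c*0) - 0\<bar>)) * c) (at 0)"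
    by (rule DERIV_chain2[OF E_deriv]) (use d in \<open>auto intro!: derivative_eq_intros\<close>)
  then show ?thesis by (simp add: algebra_simps)
qed

lemma dX_ham:
  fixes x m :: "real^'n"
  assumes inj: "inj (\<lambda>i. x$i)"
  shows "dX ham k x m = -2 * (\<Sum>l\<in>UNIV. m$k * m$l * sgn (x$k - x$l) * exp (- \<bar>x$k - x$l\<bar>))"
proof -
  define c where "c i l = (if i = k then 1 else 0) - (if l = k then 1 else 0 :: real)" for i l
  define f where "f i l = m$i * m$l * sgn (x$i - x$l) * exp (- \<bar>x$i - x$l\<bar>)" for i l
  have comp: "ham (x + t *\<^sub>R axis k 1) m = (\<Sum>i\<in>UNIV. \<Sum>l\<in>UNIV. m$i * m$l * exp (- \<bar>(x$i - x$l) + c i l * t\<bar>))" for t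
    unfolding ham_def c_def by (intro sum.cong refl) (auto simp: axis_def algebra_simps)
  have cond: "x$i - x$l \<noteq> 0 \<or> c i l = 0" for i l
    using inj by (cases "i = l") (auto simp: c_def dest: injD)
  have D: "((\<lambda>t. ham (x + t *\<^sub>R axis k 1) m) has_real_derivative
      (\<Sum>i\<in>UNIV. \<Sum>l\<in>UNIV. m$i * m$l * (- c i l * sgn (x$i - x$l) * exp (- \<bar>x$i - x$l\<bar>)))) (at 0)"
    unfolding comp
    by (intro DERIV_sum DERIV_cmult term_deriv cond)
  have "(\<Sum>i\<in>UNIV. \<Sum>l\<in>UNIV. m$i * m$l * (- c i l * sgn (x$i - x$l) * exp (- \<bar>x$i - x$l\<bar>)))
      = (\<Sum>i\<in>UNIV. \<Sum>l\<in>UNIV. (if l = k then f i l else 0) - (if i = k then f i l else 0))"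
    by (intro sum.cong refl) (auto simp: c_def f_def)
  also have "\<dots> = (\<Sum>i\<in>UNIV. \<Sum>l\<in>UNIV. if l = k then f i l else 0) - (\<Sum>i\<in>UNIV. \<Sum>l\<in>UNIV. if i = k then f i l else 0)"
    by (simp only: sum_subtractf)
  also have "(\<Sum>i\<in>UNIV. \<Sum>l\<in>UNIV. if i = k then f i l else 0) = (\<Sum>l\<in>UNIV. \<Sum>i\<in>UNIV. if i = k then f i l else 0)"
    by (rule sum.swap)
  also have "\<dots> = (\<Sum>l\<in>UNIV. f k l)" by (simp add: sum.delta')
  also have "(\<Sum>i\<in>UNIV. \<Sum>l\<in>UNIV. if l = k then f i l else 0) = (\<Sum>i\<in>UNIV. f i k)" by (simp add: sum.delta')
  also have "(\<Sum>i\<in>UNIV. f i k) = - (\<Sum>l\<in>UNIV. f k l)"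
  proof -
    have "f i k = - f k i" for i
    proof -
      have "sgn (x$k - x$i) = - sgn (x$i - x$k)" by (simp add: sgn_if)
      then show ?thesis unfolding f_def by (simp add: abs_minus_commute)
    qed
    then show ?thesis by (simp add: sum_negf)
  qed
  finally have e: "(\<Sum>i\<in>UNIV. \<Sum>l\<in>UNIV. m$i * m$l * (- c i l * sgn (x$i - x$l) * exp (- \<bar>x$i - x$l\<bar>)))
      = -2 * (\<Sum>l\<in>UNIV. f k l)" by simp
  show ?thesis
    unfolding dX_def using DERIV_imp_deriv[OF D] e by (simp add: f_def)
qed


lemma dX_coord:
  fixes x m :: "real^'n"
  shows "dX (\<lambda>x m. x$j) i x m = (if i = j then 1 else 0)"
proof -
  have "((\<lambda>t. (x + t *\<^sub>R axis i 1)$j) has_real_derivative (if i = j then 1 else 0)) (at 0)"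
  proof -
    have e: "(\<lambda>t. (x + t *\<^sub>R axis i 1)$j) = (\<lambda>t. x$j + t * (if j = i then 1 else 0))"
      by (auto simp: axis_def fun_eq_iff)
    show ?thesis unfolding e by (auto intro!: derivative_eq_intros)
  qed
  then show ?thesis unfolding dX_def by (rule DERIV_imp_deriv)
qed

lemma dX_mcoord:
  fixes x m :: "real^'n"
  shows "dX (\<lambda>x m. m$j) i x m = 0"
  unfolding dX_def by simp

lemma part1:
  fixes x m :: "real^'n"
  assumes distinct: "inj (\<lambda>i. x$i)"
  shows "pbracket (\<lambda>x m. x$j) ham x m = mCH_rhs x m j"
proof -
  have "pbracket (\<lambda>x m. x$j) ham x m = (\<Sum>i\<in>UNIV. \<Sum>k\<in>UNIV. (if i = j then 1 else 0) * dX ham k x m * sgn (x$i - x$k))"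
    unfolding pbracket_def dX_coord by simp
  also have "\<dots> = (\<Sum>i\<in>UNIV. if i = j then (\<Sum>k\<in>UNIV. sgn (x$i - x$k) * dX ham k x m) else 0)"
    by (intro sum.cong refl) (auto simp: mult.commute)
  also have "\<dots> = (\<Sum>k\<in>UNIV. sgn (x$j - x$k) * dX ham k x m)"
    by simp
  also have "\<dots> = mCH_rhs x m j"
    unfolding dX_ham[OF distinct] mCH_rhs_def
    using sum_ident[OF distinct, of j "\<lambda>i. m$i"] by simp
  finally show ?thesis .
qed

lemma part2:
  fixes x m :: "real^'n"
  shows "pbracket (\<lambda>x m. m$j) ham x m = 0"
  unfolding pbracket_def dX_mcoord by simp


lemma part3:
  fixes x m :: "real^'n" and \<phi> \<phi>' \<phi>'' :: "real \<Rightarrow> real"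
  assumes d1: "\<And>\<xi>. (\<phi> has_real_derivative \<phi>' \<xi>) (at \<xi>)"
    and d2: "\<And>\<xi>. (\<phi>' has_real_derivative \<phi>'' \<xi>) (at \<xi>)"
    and bnd: "bounded {\<xi>. \<phi> \<xi> \<noteq> 0}"
  shows "((\<lambda>\<xi>. peakon_u x m \<xi> * (\<phi> \<xi> - \<phi>'' \<xi>)) has_integral pair_with_m x m \<phi>) UNIV"
proof -
  have "((\<lambda>\<xi>. \<Sum>j\<in>UNIV. m$j * (exp (- \<bar>\<xi> - x$j\<bar>) * (\<phi> \<xi> - \<phi>'' \<xi>))) has_integral (\<Sum>j\<in>UNIV. m$j * (2 * \<phi> (x$j)))) UNIV"
    by (intro has_integral_sum has_integral_mult_right D_lemma[OF d1 d2 bnd]) simp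
  moreover have "(\<lambda>\<xi>. \<Sum>j\<in>UNIV. m$j * (exp (- \<bar>\<xi> - x$j\<bar>) * (\<phi> \<xi> - \<phi>'' \<xi>))) = (\<lambda>\<xi>. peakon_u x m \<xi> * (\<phi> \<xi> - \<phi>'' \<xi>))"
    by (auto simp: fun_eq_iff peakon_u_def sum_distrib_right sum_distrib_left mult_ac)
  moreover have "(\<Sum>j\<in>UNIV. m$j * (2 * \<phi> (x$j))) = pair_with_m x m \<phi>"
    by (auto simp: pair_with_m_def mult_ac)
  ultimately show ?thesis by simp
qed

lemma part4:
  fixes x m :: "real^'n"
  shows "ham x m = 1/2 * pair_with_m x m (peakon_u x m)"
  unfolding ham_def pair_with_m_def peakon_u_def
  by (simp add: sum_distrib_left sum_distrib_right mult_ac abs_minus_commute)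

lemma part5:
  fixes x m :: "real^'n"
  shows "((\<lambda>\<xi>. (peakon_u x m \<xi>)\<^sup>2 + (deriv (peakon_u x m) \<xi>)\<^sup>2) has_integral (2 * ham x m)) UNIV"
proof -
  have I: "((\<lambda>\<xi>. \<Sum>j\<in>UNIV. \<Sum>k\<in>UNIV. m$j * m$k * Kf (x$j) (x$k) \<xi>) has_integral
      (\<Sum>j\<in>UNIV. \<Sum>k\<in>UNIV. m$j * m$k * (2 * exp (- \<bar>x$j - x$k\<bar>)))) UNIV"
    by (intro has_integral_sum has_integral_mult_right K_all) simp_all
  have v: "(\<Sum>j\<in>UNIV. \<Sum>k\<in>UNIV. m$j * m$k * (2 * exp (- \<bar>x$j - x$k\<bar>))) = 2 * ham x m"
    unfolding ham_def by (simp add: sum_distrib_left mult_ac)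
  show ?thesis
  proof (rule has_integral_spike_finite[OF _ _ I[unfolded v], of "range (\<lambda>i. x$i)"])
    fix \<xi> assume "\<xi> \<in> UNIV - range (\<lambda>i. x$i)"
    then have ne: "\<xi> \<noteq> x$j" for j by auto
    have pu: "peakon_u x m = (\<lambda>\<xi>. \<Sum>j\<in>UNIV. m$j * exp (- \<bar>\<xi> - x$j\<bar>))"
      by (simp add: fun_eq_iff peakon_u_def)
    have "(peakon_u x m has_real_derivative (\<Sum>j\<in>UNIV. m$j * (- sgn (\<xi> - x$j) * exp (- \<bar>\<xi> - x$j\<bar>)))) (at \<xi>)"
      unfolding pu by (intro DERIV_sum DERIV_cmult E_deriv ne)
    then have dv: "deriv (peakon_u x m) \<xi> = (\<Sum>j\<in>UNIV. m$j * (- sgn (\<xi> - x$j) * exp (- \<bar>\<xi> - x$j\<bar>)))"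
      by (rule DERIV_imp_deriv)
    show "(peakon_u x m \<xi>)\<^sup>2 + (deriv (peakon_u x m) \<xi>)\<^sup>2 = (\<Sum>j\<in>UNIV. \<Sum>k\<in>UNIV. m$j * m$k * Kf (x$j) (x$k) \<xi>)"
      unfolding dv peakon_u_def power2_eq_square sum_product
      by (simp add: sum.distrib[symmetric] Kf_def algebra_simps)
  qed auto
qed

theorem theorem1:
  fixes x m :: "real^'n"
  assumes distinct: "inj (\<lambda>i. x$i)"
  shows "(\<forall>j. pbracket (\<lambda>x m. x$j) ham x m = mCH_rhs x m j)
       \<and> (\<forall>j. pbracket (\<lambda>x m. m$j) ham x m = 0)
       \<and> (\<forall>\<phi> \<phi>' \<phi>''. (\<forall>\<xi>. (\<phi> has_real_derivative \<phi>' \<xi>) (at \<xi>))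
             \<and> (\<forall>\<xi>. (\<phi>' has_real_derivative \<phi>'' \<xi>) (at \<xi>))
             \<and> continuous_on UNIV \<phi>'' \<and> bounded {\<xi>. \<phi> \<xi> \<noteq> 0}
           \<longrightarrow> ((\<lambda>\<xi>. peakon_u x m \<xi> * (\<phi> \<xi> - \<phi>'' \<xi>)) has_integral pair_with_m x m \<phi>) UNIV)
       \<and> ham x m = 1/2 * pair_with_m x m (peakon_u x m)
       \<and> ((\<lambda>\<xi>. (peakon_u x m \<xi>)\<^sup>2 + (deriv (peakon_u x m) \<xi>)\<^sup>2) has_integral (2 * ham x m)) UNIV"
  using part1[OF distinct] part2 part3 part4 part5 by blast

end
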